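(* Let $(R,+,\cdot)$ be a Commutative Ring with Unity $1$ and additive identity $0$, and let $(\mathbb S,+_{\mathbb S},\cdot_{\mathbb S})$ be the structure on $\mathbb S=R\times R$ described in the context. Then $(\mathbb S,+_{\mathbb S},\cdot_{\mathbb S})$ is an S-Ring with $(\mathbb S_0,+_{\mathbb S},\cdot_{\mathbb S})\cong(R,+,\cdot)$; that is, $(\mathbb S,+_{\mathbb S},\cdot_{\mathbb S})$ is a Proper S-Ring Extension of $(R,+,\cdot)$.
   Context: Construction: $\mathbb S=R\times R=\{(x,y):x,y\in R\}$, with $\mathbf 0=(0,0)$ and distinguished element $\mathbf 1=(1,0)$, and operations $(x,y)+_{\mathbb S}(u,v)=(x+u,\,y+v)$ and $(x,y)\cdot_{\mathbb S}(u,v)=(x\cdot u+y+v-x\cdot v-y\cdot u,\;y\cdot v+x\cdot v+y\cdot u)$. General definitions (written for a structure $(\mathbb S,+,\cdot)$ with zero $0$ and distinguished element $1$): An S-Structure is a triple $(\mathbb S,+,\cdot)$ where $+,\cdot$ are binary operations on the set $\mathbb S$ such that $(\mathbb S,+)$ is a commutative group with identity $0$ (inverse $-s$, $s-t:=s+(-t)$), $\mathbb S$ is closed under $\cdot$, and there is $s\in\mathbb S$ with $0\cdot s\neq0$ or $s\cdot0\neq0$. Commutative: $s\cdot t=t\cdot s$ for all $s,t$. For $\alpha\in\mathbb S$: $\mathbb S_\alpha=\{s:0\cdot s=s\cdot0=\alpha\}$, $\Lambda=\{\alpha:\mathbb S_\alpha\neq\emptyset\}$. Wheel Distributive: $s\cdot(t+r)+(s\cdot0)=(s\cdot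 t)+(s\cdot r)$ for all $s,t,r$. S-Associative: for all $m,n\in\mathbb S_0$, $s\in\mathbb S$, $m\cdot(n\cdot s)=(m\cdot n)\cdot s-([(m-1)\cdot(n-1)]\cdot(0\cdot s))$. Base: if $\mathbb S_0\neq\emptyset$, $\alpha\in\Lambda$, then $q\in\mathbb S_\alpha$ is a Base for $\mathbb S_\alpha$ if $q+\beta\in\mathbb S_\alpha$ for all $\beta\in\mathbb S_0$ and each $s\in\mathbb S_\alpha$ is $q+\beta$ for some $\beta\in\mathbb S_0$; Coordinated: $\mathbb S_0\neq\emptyset$ and each $\mathbb S_\alpha$, $\alpha\in\Lambda$, has a Base. Standard Bases (for a Coordinated Commutative S-Structure): there is a specified $q_0(1)\in\mathbb S_1$ which is a Base for $\mathbb S_1$, and for each $\alpha\in\Lambda$, $q_0(\alpha):=\alpha\cdot(q_0(1)+1)-1$ lies in $\mathbb S_\alpha$ and is a Base for $\mathbb S_\alpha$. Essential S-Structure: Commutative, Wheel Distributive, S-Associative, has Standard Bases, $0,1\in\mathbb S_0$, and $\mathbb S_0=\{1\cdot x:x\in\mathbb S_0\}$. Unity: $e\in\Lambda$ with $e\cdot s=s\cdot e=s$ for all $s$. S-Ring: Essential S-Structure with a Unity. S-Extension: $(\mathbb S,+,\cdot)$ is an S-Extension of $(F,+_F,\cdot_F)$ if $F$ is closed under $+_F$ and $\cdot_F$, $(\mathbb S,+,\cdot)$ is an S-Structure, and there is $F_{\mathbb S}\subset\mathbb S$ and an isomorphism $\phi:(F,+_F,\cdot_F)\to(F_{\mathbb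 S},+,\cdot)$. It is a Proper S-Extension if moreover $(\mathbb S_0,+,\cdot)\cong(F,+_F,\cdot_F)$. A Proper S-Ring Extension is an S-Ring that is a Proper S-Extension. *)

theory Defs
  imports Main
begin

definition s_neg :: "'b set \<Rightarrow> ('b \<Rightarrow> 'b \<Rightarrow> 'b) \<Rightarrow> 'b \<Rightarrow> 'b \<Rightarrow> 'b" where
  "s_neg S p z s = (THE t. t \<in> S \<and> p s t = z)"

definition s_sub :: "'b set \<Rightarrow> ('b \<Rightarrow> 'b \<Rightarrow> 'b) \<Rightarrow> 'b \<Rightarrow> 'b \<Rightarrow> 'b \<Rightarrow> 'b" where
  "s_sub S p z s t = p s (s_neg S p z t)"

definition s_structure :: "'b set \<Rightarrow> ('b \<Rightarrow> 'b \<Rightarrow> 'b) \<Rightarrow> ('b \<Rightarrow> 'b \<Rightarrow> 'b) \<Rightarrow> 'b \<Rightarrow> bool" where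
  "s_structure S p m z \<longleftrightarrow>
     z \<in> S \<and>
     (\<forall>a\<in>S. \<forall>b\<in>S. p a b \<in> S) \<and>
     (\<forall>a\<in>S. \<forall>b\<in>S. \<forall>c\<in>S. p (p a b) c = p a (p b c)) \<and>
     (\<forall>a\<in>S. \<forall>b\<in>S. p a b = p b a) \<and>
     (\<forall>a\<in>S. p z a = a) \<and>
     (\<forall>a\<in>S. \<exists>b\<in>S. p a b = z) \<and>
     (\<forall>a\<in>S. \<forall>b\<in>S. m a b \<in> S) \<and>
     (\<exists>s\<in>S. m z s \<noteq> z \<or> m s z \<noteq> z)"

definition s_commutative :: "'b set \<Rightarrow> ('b \<Rightarrow> 'b \<Rightarrow> 'b) \<Rightarrow> bool" where
  "s_commutative S m \<longleftrightarrow> (\<forall>s\<in>S. \<forall>t\<in>S. m s t = m t s)"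

definition S_sub :: "'b set \<Rightarrow> ('b \<Rightarrow> 'b \<Rightarrow> 'b) \<Rightarrow> 'b \<Rightarrow> 'b \<Rightarrow> 'b set" where
  "S_sub S m z \<alpha> = {s \<in> S. m z s = \<alpha> \<and> m s z = \<alpha>}"

definition S_Lambda :: "'b set \<Rightarrow> ('b \<Rightarrow> 'b \<Rightarrow> 'b) \<Rightarrow> 'b \<Rightarrow> 'b set" where
  "S_Lambda S m z = {\<alpha>. S_sub S m z \<alpha> \<noteq> {}}"

definition wheel_distributive :: "'b set \<Rightarrow> ('b \<Rightarrow> 'b \<Rightarrow> 'b) \<Rightarrow> ('b \<Rightarrow> 'b \<Rightarrow> 'b) \<Rightarrow> 'b \<Rightarrow> bool" where
  "wheel_distributive S p m z \<longleftrightarrow>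
     (\<forall>s\<in>S. \<forall>t\<in>S. \<forall>r\<in>S. p (m s (p t r)) (m s z) = p (m s t) (m s r))"

definition s_associative :: "'b set \<Rightarrow> ('b \<Rightarrow> 'b \<Rightarrow> 'b) \<Rightarrow> ('b \<Rightarrow> 'b \<Rightarrow> 'b) \<Rightarrow> 'b \<Rightarrow> 'b \<Rightarrow> bool" where
  "s_associative S p m z e \<longleftrightarrow>
     (\<forall>a\<in>S_sub S m z z. \<forall>b\<in>S_sub S m z z. \<forall>s\<in>S.
        m a (m b s) = s_sub S p z (m (m a b) s)
                        (m (m (s_sub S p z a e) (s_sub S p z b e)) (m z s)))"

definition is_base :: "'b set \<Rightarrow> ('b \<Rightarrow> 'b \<Rightarrow> 'b) \<Rightarrow> ('b \<Rightarrow> 'b \<Rightarrow> 'b) \<Rightarrow> 'b \<Rightarrow> 'b \<Rightarrow> 'b \<Rightarrow> bool" where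
  "is_base S p m z \<alpha> q \<longleftrightarrow>
     q \<in> S_sub S m z \<alpha> \<and>
     (\<forall>\<beta>\<in>S_sub S m z z. p q \<beta> \<in> S_sub S m z \<alpha>) \<and>
     (\<forall>s\<in>S_sub S m z \<alpha>. \<exists>\<beta>\<in>S_sub S m z z. s = p q \<beta>)"

definition coordinated :: "'b set \<Rightarrow> ('b \<Rightarrow> 'b \<Rightarrow> 'b) \<Rightarrow> ('b \<Rightarrow> 'b \<Rightarrow> 'b) \<Rightarrow> 'b \<Rightarrow> bool" where
  "coordinated S p m z \<longleftrightarrow>
     S_sub S m z z \<noteq> {} \<and> (\<forall>\<alpha>\<in>S_Lambda S m z. \<exists>q. is_base S p m z \<alpha> q)"

definition has_standard_bases :: "'b set \<Rightarrow> ('b \<Rightarrow> 'b \<Rightarrow> 'b) \<Rightarrow> ('b \<Rightarrow> 'b \<Rightarrow> 'b) \<Rightarrow> 'b \<Rightarrow> 'b \<Rightarrow> bool" where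
  "has_standard_bases S p m z e \<longleftrightarrow>
     coordinated S p m z \<and> s_commutative S m \<and>
     (\<exists>q1. is_base S p m z e q1 \<and>
        (\<forall>\<alpha>\<in>S_Lambda S m z. is_base S p m z \<alpha> (s_sub S p z (m \<alpha> (p q1 e)) e)))"

definition essential_s_structure :: "'b set \<Rightarrow> ('b \<Rightarrow> 'b \<Rightarrow> 'b) \<Rightarrow> ('b \<Rightarrow> 'b \<Rightarrow> 'b) \<Rightarrow> 'b \<Rightarrow> 'b \<Rightarrow> bool" where
  "essential_s_structure S p m z e \<longleftrightarrow>
     s_structure S p m z \<and> e \<in> S \<and>
     s_commutative S m \<and> wheel_distributive S p m z \<and> s_associative S p m z e \<and>
     has_standard_bases S p m z e \<and>
     z \<in> S_sub S m z z \<and> e \<in> S_sub S m z z \<and>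
     S_sub S m z z = {m e x | x. x \<in> S_sub S m z z}"

definition is_unity :: "'b set \<Rightarrow> ('b \<Rightarrow> 'b \<Rightarrow> 'b) \<Rightarrow> 'b \<Rightarrow> 'b \<Rightarrow> bool" where
  "is_unity S m z u \<longleftrightarrow> u \<in> S_Lambda S m z \<and> (\<forall>s\<in>S. m u s = s \<and> m s u = s)"

definition s_ring :: "'b set \<Rightarrow> ('b \<Rightarrow> 'b \<Rightarrow> 'b) \<Rightarrow> ('b \<Rightarrow> 'b \<Rightarrow> 'b) \<Rightarrow> 'b \<Rightarrow> 'b \<Rightarrow> bool" where
  "s_ring S p m z e \<longleftrightarrow> essential_s_structure S p m z e \<and> (\<exists>u. is_unity S m z u)"

definition iso_on :: "'a set \<Rightarrow> ('a \<Rightarrow> 'a \<Rightarrow> 'a) \<Rightarrow> ('a \<Rightarrow> 'a \<Rightarrow> 'a) \<Rightarrow>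
    'b set \<Rightarrow> ('b \<Rightarrow> 'b \<Rightarrow> 'b) \<Rightarrow> ('b \<Rightarrow> 'b \<Rightarrow> 'b) \<Rightarrow> ('a \<Rightarrow> 'b) \<Rightarrow> bool" where
  "iso_on A pA mA B pB mB \<phi> \<longleftrightarrow> bij_betw \<phi> A B \<and>
     (\<forall>x\<in>A. \<forall>y\<in>A. \<phi> (pA x y) = pB (\<phi> x) (\<phi> y) \<and> \<phi> (mA x y) = mB (\<phi> x) (\<phi> y))"

definition isomorphic :: "'a set \<Rightarrow> ('a \<Rightarrow> 'a \<Rightarrow> 'a) \<Rightarrow> ('a \<Rightarrow> 'a \<Rightarrow> 'a) \<Rightarrow>
    'b set \<Rightarrow> ('b \<Rightarrow> 'b \<Rightarrow> 'b) \<Rightarrow> ('b \<Rightarrow> 'b \<Rightarrow> 'b) \<Rightarrow> bool" where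
  "isomorphic A pA mA B pB mB \<longleftrightarrow> (\<exists>\<phi>. iso_on A pA mA B pB mB \<phi>)"

definition s_extension :: "'b set \<Rightarrow> ('b \<Rightarrow> 'b \<Rightarrow> 'b) \<Rightarrow> ('b \<Rightarrow> 'b \<Rightarrow> 'b) \<Rightarrow> 'b \<Rightarrow>
    'a set \<Rightarrow> ('a \<Rightarrow> 'a \<Rightarrow> 'a) \<Rightarrow> ('a \<Rightarrow> 'a \<Rightarrow> 'a) \<Rightarrow> bool" where
  "s_extension S p m z F pF mF \<longleftrightarrow>
     (\<forall>x\<in>F. \<forall>y\<in>F. pF x y \<in> F \<and> mF x y \<in> F) \<and>
     s_structure S p m z \<and>
     (\<exists>FS \<subseteq> S. isomorphic F pF mF FS p m)"

definition proper_s_extension :: "'b set \<Rightarrow> ('b \<Rightarrow> 'b \<Rightarrow> 'b) \<Rightarrow> ('b \<Rightarrow> 'b \<Rightarrow> 'b) \<Rightarrow> 'b \<Rightarrow>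
    'a set \<Rightarrow> ('a \<Rightarrow> 'a \<Rightarrow> 'a) \<Rightarrow> ('a \<Rightarrow> 'a \<Rightarrow> 'a) \<Rightarrow> bool" where
  "proper_s_extension S p m z F pF mF \<longleftrightarrow>
     s_extension S p m z F pF mF \<and> isomorphic (S_sub S m z z) p m F pF mF"

definition proper_s_ring_extension :: "'b set \<Rightarrow> ('b \<Rightarrow> 'b \<Rightarrow> 'b) \<Rightarrow> ('b \<Rightarrow> 'b \<Rightarrow> 'b) \<Rightarrow> 'b \<Rightarrow> 'b \<Rightarrow>
    'a set \<Rightarrow> ('a \<Rightarrow> 'a \<Rightarrow> 'a) \<Rightarrow> ('a \<Rightarrow> 'a \<Rightarrow> 'a) \<Rightarrow> bool" where
  "proper_s_ring_extension S p m z e F pF mF \<longleftrightarrow>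
     s_ring S p m z e \<and> proper_s_extension S p m z F pF mF"

definition pplus :: "'a::comm_ring_1 \<times> 'a \<Rightarrow> 'a \<times> 'a \<Rightarrow> 'a \<times> 'a" where
  "pplus s t = (case s of (x, y) \<Rightarrow> case t of (u, v) \<Rightarrow> (x + u, y + v))"

definition ptimes :: "'a::comm_ring_1 \<times> 'a \<Rightarrow> 'a \<times> 'a \<Rightarrow> 'a \<times> 'a" where
  "ptimes s t = (case s of (x, y) \<Rightarrow> case t of (u, v) \<Rightarrow>
      (x * u + y + v - x * v - y * u, y * v + x * v + y * u))"

end

theory Submission
  imports Defs
begin

lemma pp[simp]: "pplus (x,y) (u,v) = (x+u, y+v)" by (simp add: pplus_def)
lemma pt[simp]: "ptimes (x,y) (u,v) = (x*u + y + v - x*v - y*u, y*v + x*v + y*u)"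
  by (simp add: ptimes_def)

lemma neg[simp]: "s_neg UNIV pplus (0,0) (a,b) = (-a,-b::'a::comm_ring_1)"
  unfolding s_neg_def
  proof (rule the_equality)
  fix t assume "t \<in> UNIV \<and> pplus (a,b) t = (0,0)"
  then show "t = (-a,-b)" by (cases t) (simp add: add_eq_0_iff)
qed simp

lemma sub[simp]: "s_sub UNIV pplus (0,0) (a,b) (c,d) = (a-c, b-d::'a::comm_ring_1)"
  by (simp add: s_sub_def)

lemma Ssub: "S_sub (UNIV::('a::comm_ring_1 \<times> 'a) set) ptimes (0,0) \<alpha> =
   (if snd \<alpha> = 0 then {s. snd s = fst \<alpha>} else {})"
  by (cases \<alpha>) (auto simp: S_sub_def)

lemma Lam: "S_Lambda (UNIV::('a::comm_ring_1 \<times> 'a) set) ptimes (0,0) = {\<alpha>. snd \<alpha> = 0}"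
  by (auto simp: S_Lambda_def Ssub)

lemma base:
  fixes \<alpha> q :: "'a::comm_ring_1 \<times> 'a"
  assumes h: "snd \<alpha> = 0" "snd q = fst \<alpha>"
  shows "is_base UNIV pplus ptimes (0,0) \<alpha> q"
proof -
  obtain c a where q: "q = (c,a)" by (cases q)
  have 1: "q \<in> S_sub UNIV ptimes (0,0) \<alpha>" using h by (simp add: Ssub)
  have 2: "\<forall>\<beta>\<in>S_sub UNIV ptimes (0,0) (0,0). pplus q \<beta> \<in> S_sub UNIV ptimes (0,0) \<alpha>"
  proof
    fix \<beta> :: "'a \<times> 'a" assume "\<beta> \<in> S_sub UNIV ptimes (0,0) (0,0)"
    then show "pplus q \<beta> \<in> S_sub UNIV ptimes (0,0) \<alpha>"
      using h q by (cases \<beta>) (simp add: Ssub)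
  qed
  have 3: "\<forall>s\<in>S_sub UNIV ptimes (0,0) \<alpha>. \<exists>\<beta>\<in>S_sub UNIV ptimes (0,0) (0,0). s = pplus q \<beta>"
  proof
    fix s :: "'a \<times> 'a" assume "s \<in> S_sub UNIV ptimes (0,0) \<alpha>"
    then obtain u where s: "s = (u, a)" using h q by (cases s) (simp add: Ssub)
    show "\<exists>\<beta>\<in>S_sub UNIV ptimes (0,0) (0,0). s = pplus q \<beta>"
      by (rule bexI[of _ "(u - c, 0)"]) (simp_all add: s q Ssub)
  qed
  show ?thesis using 1 2 3 by (simp add: is_base_def)
qed

theorem theorem3p4p1:
  shows "proper_s_ring_extension (UNIV :: ('a::comm_ring_1 \<times> 'a) set) pplus ptimes (0, 0) (1, 0)
           (UNIV :: 'a set) (+) (*)"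
proof -
  let ?S = "UNIV :: ('a \<times> 'a) set"
  have str: "s_structure ?S pplus ptimes (0,0)"
    unfolding s_structure_def
  proof (intro conjI ballI)
    fix a b c :: "'a \<times> 'a"
    show "pplus (pplus a b) c = pplus a (pplus b c)"
      by (cases a; cases b; cases c) (simp add: add.assoc)
    show "pplus a b = pplus b a" by (cases a; cases b) (simp add: add.commute)
    show "pplus (0,0) a = a" by (cases a) simp
    show "\<exists>b\<in>?S. pplus a b = (0,0)" by (cases a) (rule bexI[of _ "(- fst a, - snd a)"], auto)
    show "\<exists>s\<in>?S. ptimes (0,0) s \<noteq> (0,0) \<or> ptimes s (0,0) \<noteq> (0,0)"
      by (rule bexI[of _ "(0,1)"]) auto
  qed simp_all
  have com: "s_commutative ?S ptimes"
    unfolding s_commutative_def apply clarify apply (simp add: algebra_simps) done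
  have wd: "wheel_distributive ?S pplus ptimes (0,0)"
    unfolding wheel_distributive_def apply clarify apply (simp add: algebra_simps) done
  have sa: "s_associative ?S pplus ptimes (0,0) (1,0)"
    unfolding s_associative_def Ssub apply clarsimp apply (simp add: algebra_simps) done
  have coord: "coordinated ?S pplus ptimes (0,0)"
    unfolding coordinated_def Lam
    using base by (auto simp: Ssub) blast
  have sb: "has_standard_bases ?S pplus ptimes (0,0) (1,0)"
    unfolding has_standard_bases_def
    apply (intro conjI coord com exI[of _ "(0,1)"])
     apply (rule base; simp)
    apply (auto simp: Lam intro!: base)
    done
  have S0: "S_sub ?S ptimes (0,0) (0,0) = {s. snd s = 0}" by (simp add: Ssub)
  have ess: "essential_s_structure ?S pplus ptimes (0,0) (1,0)"
    unfolding essential_s_structure_def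
    using str com wd sa sb by (auto simp: S0)
  have un: "is_unity ?S ptimes (0,0) (1,0)"
    by (auto simp: is_unity_def Lam)
  have iso1: "iso_on (UNIV::'a set) (+) (*) {s. snd s = (0::'a)} pplus ptimes (\<lambda>x. (x,0))"
    unfolding iso_on_def bij_betw_def inj_on_def by auto
  have iso2: "iso_on {s. snd s = (0::'a)} pplus ptimes (UNIV::'a set) (+) (*) fst"
    unfolding iso_on_def bij_betw_def inj_on_def by (auto simp: image_iff)
  show ?thesis
    unfolding proper_s_ring_extension_def s_ring_def proper_s_extension_def s_extension_def
      isomorphic_def S0
    using ess un str iso1 iso2 by blast
qed

end
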